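(* Let $0<q<1$ and $t>0$, let $n\ge 0$ be an integer, and let $u\in\mathbb{C}\setminus\{0\}$. Put $\sinh\xi_n:=\frac{q^{-nt}u-q^{nt}u^{-1}}{2}$. Then $$\left|h_n(\sinh\xi_n\,|\,q)\right|\le \frac{|u|^n}{q^{n^2t}}\,A_q\!\left(-\frac{q^{n(2t-1)}}{|u|^2}\right).$$
   Context: Notation: $(a;q)_0:=1$, $(a;q)_k:=\prod_{j=0}^{k-1}(1-aq^j)$, $(a;q)_\infty:=\prod_{j=0}^{\infty}(1-aq^j)$, and $\left[\begin{array}{c}n\\k\end{array}\right]_q:=\frac{(q;q)_n}{(q;q)_k(q;q)_{n-k}}$. Ramanujan's function is the entire function $A_q(z):=\sum_{k=0}^{\infty}\frac{q^{k^2}}{(q;q)_k}(-z)^k$. The Ismail–Masson ($q^{-1}$-Hermite) polynomial $h_n(x|q)$ is the polynomial of degree $n$ in $x$ determined by $h_n\!\left(\tfrac{v-v^{-1}}{2}\,\middle|\,q\right)=\sum_{k=0}^{n}\left[\begin{array}{c}n\\k\end{array}\right]_q q^{k(k-n)}(-1)^k v^{n-2k}$ for all $v\in\mathbb{C}\setminus\{0\}$ (i.e. $h_n(\sinh\xi|q)=\sum_{k=0}^n \left[\begin{array}{c}n\\k\end{array}\right]_q q^{k(k-n)}(-1)^ke^{(n-2k)\xi}$). In the claim, $h_n(\sinh\xi_n|q)$ means $h_n$ evaluated at $x=\frac{q^{-nt}u-q^{nt}u^{-1}}{2}$. *)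

theory Defs
  imports "HOL-Analysis.Analysis"
begin

definition qpoch :: "'a::comm_ring_1 \<Rightarrow> 'a \<Rightarrow> nat \<Rightarrow> 'a" where
  "qpoch a q k = (\<Prod>j<k. 1 - a * q ^ j)"

definition qbinom :: "real \<Rightarrow> nat \<Rightarrow> nat \<Rightarrow> real" where
  "qbinom q n k = qpoch q q n / (qpoch q q k * qpoch q q (n - k))"

definition ramanujanA :: "real \<Rightarrow> real \<Rightarrow> real" where
  "ramanujanA q z = (\<Sum>k. q ^ (k^2) / qpoch q q k * (- z) ^ k)"

text \<open>The right-hand side of the defining identity of h_n, as a function of v.\<close>
definition hsum :: "real \<Rightarrow> nat \<Rightarrow> complex \<Rightarrow> complex" where
  "hsum q n v = (\<Sum>k\<le>n. complex_of_real (qbinom q n k * q powr (real k * (real k - real n)))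
                    * (-1) ^ k * v powi (int n - 2 * int k))"

text \<open>Ismail--Masson polynomial h_n(x|q): evaluate the defining sum at any v \<noteq> 0 with
  (v - 1/v)/2 = x (such v always exists; the value does not depend on the choice).\<close>
definition ismail_masson_h :: "nat \<Rightarrow> complex \<Rightarrow> real \<Rightarrow> complex" where
  "ismail_masson_h n x q = hsum q n (SOME v. v \<noteq> 0 \<and> (v - inverse v) / 2 = x)"

end

theory Submission
  imports Defs
begin

lemma qpoch_pos: "0 < q \<Longrightarrow> q < (1::real) \<Longrightarrow> 0 < qpoch q q m"
  unfolding qpoch_def
proof (intro prod_pos ballI)
  fix j assume "0 < q" "q < 1"
  hence "q ^ j \<le> 1" by (simp add: power_le_one)
  hence "q * q ^ j \<le> q" using mult_left_mono[of "q^j" 1 q] \<open>0 < q\<close> by simp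
  hence "q * q ^ j < 1" using \<open>q < 1\<close> by simp
  thus "0 < 1 - q * q ^ j" by simp
qed

lemma qpoch_mono: assumes "0 < q" "q < (1::real)" "m \<le> n" shows "qpoch q q n \<le> qpoch q q m"
  using assms(3)
proof (induction n rule: dec_induct)
  case base then show ?case by simp
next
  case (step n)
  have "qpoch q q (Suc n) = qpoch q q n * (1 - q * q ^ n)" by (simp add: qpoch_def)
  also have "\<dots> \<le> qpoch q q n" using qpoch_pos[OF assms(1,2), of n] assms(1)
    by (simp add: mult_le_cancel_left1)
  finally show ?case using step by simp
qed

lemma qbinom_bounds: assumes "0 < q" "q < (1::real)" "k \<le> n"
  shows "0 \<le> qbinom q n k" "qbinom q n k \<le> 1 / qpoch q q k"
proof -
  have p: "0 < qpoch q q n" "0 < qpoch q q k" "0 < qpoch q q (n-k)" using qpoch_pos assms by auto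
  show "0 \<le> qbinom q n k" unfolding qbinom_def using p by simp
  have "qbinom q n k \<le> qpoch q q (n-k) / (qpoch q q k * qpoch q q (n - k))"
    unfolding qbinom_def using p qpoch_mono[OF assms(1,2), of "n-k" n]
    by (intro divide_right_mono) auto
  also have "\<dots> = 1 / qpoch q q k" using p by simp
  finally show "qbinom q n k \<le> 1 / qpoch q q k" .
qed

lemma qbinom_sym: "k \<le> n \<Longrightarrow> qbinom q n (n - k) = qbinom q n k"
  unfolding qbinom_def by (simp add: mult.commute)

definition S :: "real \<Rightarrow> nat \<Rightarrow> real \<Rightarrow> real" where
  "S q n r = (\<Sum>k\<le>n. qbinom q n k * q powr (real k * (real k - real n)) * r powi (int n - 2 * int k))"

lemma hsum_le: assumes "0 < q" "q < 1" shows "norm (hsum q n v) \<le> S q n (norm v)"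
  unfolding hsum_def S_def
  apply (rule order.trans[OF norm_sum])
  apply (rule sum_mono)
  using qbinom_bounds(1)[OF assms]
  by (simp add: norm_mult norm_power_int norm_power)

lemma S_inv: assumes "0 < r" shows "S q n (inverse r) = S q n r"
proof -
  have "S q n (inverse r) = (\<Sum>k=0..n. qbinom q n k * q powr (real k * (real k - real n)) * (inverse r) powi (int n - 2 * int k))"
    unfolding S_def by (simp add: atLeast0AtMost)
  also have "\<dots> = (\<Sum>k=0..n. qbinom q n (n-k) * q powr (real (n-k) * (real (n-k) - real n)) * (inverse r) powi (int n - 2 * int (n-k)))"
    by (subst sum.atLeastAtMost_rev) simp
  also have "\<dots> = (\<Sum>k=0..n. qbinom q n k * q powr (real k * (real k - real n)) * r powi (int n - 2 * int k))"
  proof (rule sum.cong[OF refl])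
    fix k assume "k \<in> {0..n}" hence k: "k \<le> n" by simp
    have e1: "real (n-k) * (real (n-k) - real n) = real k * (real k - real n)" using k
      by (simp add: of_nat_diff algebra_simps)
    have e2: "(inverse r) powi (int n - 2 * int (n-k)) = r powi (int n - 2 * int k)"
      using k by (simp add: power_int_inverse of_nat_diff flip: power_int_minus)
    show "qbinom q n (n-k) * q powr (real (n-k) * (real (n-k) - real n)) * (inverse r) powi (int n - 2 * int (n-k)) = qbinom q n k * q powr (real k * (real k - real n)) * r powi (int n - 2 * int k)"
      using e1 e2 qbinom_sym[OF k] by simp
  qed
  also have "\<dots> = S q n r" unfolding S_def by (simp add: atLeast0AtMost)
  finally show ?thesis .
qed

lemma ramA_summable: assumes q: "0 < q" "q < (1::real)" and c: "0 \<le> c"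
  shows "summable (\<lambda>k. q ^ (k^2) / qpoch q q k * c ^ k)"
proof -
  define f where "f = (\<lambda>k. q ^ (k^2) / qpoch q q k * c ^ k)"
  have "(1 - q) / (2 * (c + 1)) > 0" using q c by simp
  then obtain N where N: "q ^ N < (1 - q) / (2 * (c + 1))" using real_arch_pow_inv q by blast
  have "norm (f (Suc k)) \<le> (1/2) * norm (f k)" if k: "k \<ge> N" for k
  proof -
    have pk: "0 < qpoch q q k" using qpoch_pos q by auto
    have pS: "qpoch q q (Suc k) = qpoch q q k * (1 - q * q ^ k)" by (simp add: qpoch_def)
    have qS: "q ^ ((Suc k)^2) = q ^ (k^2) * q ^ (2*k+1)"
    proof -
      have "(Suc k)^2 = k^2 + (2*k+1)" by (simp add: power2_eq_square)
      then show ?thesis by (simp only: power_add)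
    qed
    have "1 - q * q ^ k > 0" using qpoch_pos[OF q, of "Suc k"] pk pS
      by (metis zero_less_mult_pos)
    then have fS: "f (Suc k) = f k * (q ^ (2*k+1) * c / (1 - q * q ^ k))"
      unfolding f_def pS qS using pk by (simp add: field_simps)
    have qk1: "q ^ k \<le> 1" using q by (simp add: power_le_one)
    have qqk: "q * q ^ k \<le> q" using mult_left_mono[OF qk1, of q] q by simp
    have den: "1 - q \<le> 1 - q * q ^ k" using qqk by simp
    have qN: "q ^ k \<le> q ^ N" using q k by (simp add: power_decreasing)
    have qN': "q ^ k \<le> (1 - q) / (2 * (c + 1))" using qN N by linarith
    have q2: "q ^ (2*k+1) \<le> q ^ k" using q by (intro power_decreasing) auto
    have "q ^ (2*k+1) * c / (1 - q * q ^ k) \<le> q ^ k * c / (1 - q)"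
      using q c den q2 by (intro frac_le mult_right_mono) auto
    also have "\<dots> \<le> (1 - q) / (2 * (c + 1)) * c / (1 - q)"
      using q c qN' by (intro divide_right_mono mult_right_mono) (auto simp del: divide_const_simps)
    also have "\<dots> = c / (2 * (c + 1))"
    proof -
      have h: "1 - q \<noteq> 0" "c + 1 \<noteq> 0" using q c by auto
      show ?thesis using h by (simp add: divide_simps)
    qed
    also have "\<dots> \<le> 1/2" using c by (simp add: field_simps)
    finally have r: "q ^ (2*k+1) * c / (1 - q * q ^ k) \<le> 1/2" .
    have r0: "0 \<le> q ^ (2*k+1) * c / (1 - q * q ^ k)" proof -
      have dpos: "0 < 1 - q * q ^ k" using den q by linarith
      show ?thesis using dpos q c by simp
    qed
    have f0: "0 \<le> f k" unfolding f_def using pk q c by simp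
    have "norm (f (Suc k)) = f k * (q ^ (2*k+1) * c / (1 - q * q ^ k))"
      by (simp only: fS real_norm_def abs_mult abs_of_nonneg[OF f0] abs_of_nonneg[OF r0])
    also have "\<dots> \<le> f k * (1/2)" by (rule mult_left_mono[OF r f0])
    also have "\<dots> = 1/2 * norm (f k)" using f0 by simp
    finally show ?thesis .
  qed
  then have "summable f" by (intro summable_ratio_test[of "1/2" N]) auto
  then show ?thesis unfolding f_def .
qed

lemma term_eq: assumes q: "0 < q" and a: "0 < (a::real)" and k: "k \<le> n"
  shows "q powr (real k * (real k - real n)) * (q powr (- real n * t) * a) powi (int n - 2 * int k)
    = a ^ n / q powr ((real n)^2 * t) * (q ^ (k^2) * (q powr (real n * (2 * t - 1)) / a^2) ^ k)"
proof -
  define L where "L = ln q"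
  define A where "A = ln a"
  have r: "0 < q powr (- real n * t) * a" using q a by simp
  have "(q powr (- real n * t) * a) powi (int n - 2 * int k) = (q powr (- real n * t) * a) powr (real_of_int (int n - 2 * int k))"
    using powr_real_of_int'[of "q powr (- real n * t) * a" "int n - 2 * int k"] r q a by simp
  also have "\<dots> = exp ((real n - 2 * real k) * (- real n * t * L + A))"
    using q a by (simp add: powr_def ln_mult L_def A_def)
  finally have e1: "(q powr (- real n * t) * a) powi (int n - 2 * int k) = exp ((real n - 2 * real k) * (- real n * t * L + A))" .
  have e2: "q powr (real k * (real k - real n)) = exp (real k * (real k - real n) * L)"
    using q by (simp add: powr_def L_def)
  have e3: "a ^ n = exp (real n * A)" using a by (simp add: A_def exp_of_nat_mult)
  have e4: "q ^ (k^2) = exp (real k ^ 2 * L)" using q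
    by (metis L_def exp_ln exp_of_nat_mult of_nat_power)
  have e5: "(q powr (real n * (2 * t - 1)) / a^2) ^ k = exp (real k * (real n * (2 * t - 1) * L - 2 * A))"
  proof -
    have a2: "a^2 = exp (2 * A)" using a exp_of_nat_mult[of 2 A] by (simp add: A_def)
    have "q powr (real n * (2 * t - 1)) / a^2 = exp (real n * (2 * t - 1) * L - 2 * A)"
      unfolding a2 using q a by (simp add: powr_def L_def exp_diff)
    then show ?thesis by (simp add: exp_of_nat_mult[symmetric])
  qed
  have e6: "q powr ((real n)^2 * t) = exp ((real n)^2 * t * L)" using q by (simp add: powr_def L_def)
  show ?thesis
    unfolding e1 e2 e3 e4 e5 e6
    by (simp add: exp_add[symmetric] exp_diff[symmetric] power2_eq_square algebra_simps)
qed

lemma S_bound: assumes q: "0 < q" "q < (1::real)" and a: "0 < a"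
  shows "S q n (q powr (- real n * t) * a) \<le> a ^ n / q powr ((real n)^2 * t)
            * ramanujanA q (- (q powr (real n * (2 * t - 1)) / a^2))"
proof -
  define z where "z = q powr (real n * (2 * t - 1)) / a^2"
  define C where "C = a ^ n / q powr ((real n)^2 * t)"
  define f where "f = (\<lambda>k. q ^ (k^2) / qpoch q q k * z ^ k)"
  have z0: "0 \<le> z" unfolding z_def by simp
  have C0: "0 \<le> C" unfolding C_def using a by simp
  have f0: "0 \<le> f k" for k unfolding f_def using qpoch_pos[OF q, of k] q z0 by simp
  have sf: "summable f" unfolding f_def by (rule ramA_summable[OF q z0])
  have "S q n (q powr (- real n * t) * a) \<le> (\<Sum>k\<le>n. C * f k)"
    unfolding S_def
  proof (rule sum_mono)
    fix k assume "k \<in> {..n}" hence k: "k \<le> n" by simp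
    have "qbinom q n k * q powr (real k * (real k - real n)) * (q powr (- real n * t) * a) powi (int n - 2 * int k)
      = qbinom q n k * (C * (q ^ (k^2) * z ^ k))"
      using term_eq[OF q(1) a k, of t] by (simp add: C_def z_def mult.assoc)
    also have "\<dots> \<le> 1 / qpoch q q k * (C * (q ^ (k^2) * z ^ k))"
      using qbinom_bounds(2)[OF q k] C0 z0 q by (intro mult_right_mono) auto
    also have "\<dots> = C * f k" unfolding f_def by simp
    finally show "qbinom q n k * q powr (real k * (real k - real n)) * (q powr (- real n * t) * a) powi (int n - 2 * int k) \<le> C * f k" .
  qed
  also have "\<dots> = C * (\<Sum>k\<le>n. f k)" by (simp add: sum_distrib_left)
  also have "\<dots> \<le> C * suminf f"
    using sum_le_suminf[OF sf, of "{..n}"] f0 C0 by (intro mult_left_mono) auto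
  also have "suminf f = ramanujanA q (- z)" unfolding ramanujanA_def f_def by simp
  finally show ?thesis unfolding C_def z_def .
qed

theorem mainTheorem1:
  fixes q t :: real and n :: nat and u :: complex
  assumes "0 < q" "q < 1" "0 < t" "u \<noteq> 0"
  shows "cmod (ismail_masson_h n
            ((complex_of_real (q powr (- real n * t)) * u
              - complex_of_real (q powr (real n * t)) * inverse u) / 2) q)
         \<le> cmod u ^ n / q powr ((real n)^2 * t)
            * ramanujanA q (- (q powr (real n * (2 * t - 1)) / (cmod u)^2))"
proof -
  define x where "x = (complex_of_real (q powr (- real n * t)) * u
              - complex_of_real (q powr (real n * t)) * inverse u) / 2"
  define v0 where "v0 = complex_of_real (q powr (- real n * t)) * u"
  have v00: "v0 \<noteq> 0" unfolding v0_def using assms by simp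
  have iv: "inverse v0 = complex_of_real (q powr (real n * t)) * inverse u"
    unfolding v0_def using assms by (simp add: powr_minus flip: of_real_inverse)
  have ex: "v0 \<noteq> 0 \<and> (v0 - inverse v0) / 2 = x" using v00 iv unfolding x_def v0_def by simp
  define v where "v = (SOME v. v \<noteq> 0 \<and> (v - inverse v) / 2 = x)"
  have hv: "v \<noteq> 0 \<and> (v - inverse v) / 2 = x" unfolding v_def by (rule someI[of _ v0], rule ex)
  have eq: "v - inverse v = v0 - inverse v0" using hv ex by simp
  have "(v - v0) * (v * v0 + 1) = 0"
  proof -
    have "(v - v0) * (v * v0 + 1) = v * v0 * ((v - inverse v) - (v0 - inverse v0))"
      using hv v00 by (simp add: field_simps)
    then show ?thesis using eq by simp
  qed
  then have "v - v0 = 0 \<or> v * v0 + 1 = 0" by simp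
  then have "v = v0 \<or> v = - inverse v0"
  proof
    assume "v * v0 + 1 = 0"
    then have "v * v0 = -1" by (metis add_eq_0_iff add.commute)
    then have "v = - 1 / v0" using v00 by (simp add: field_simps)
    then show ?thesis by (simp add: divide_inverse)
  qed simp
  then have nv: "norm v = norm v0 \<or> norm v = inverse (norm v0)" by (auto simp: norm_inverse)
  have nv0: "norm v0 = q powr (- real n * t) * cmod u" unfolding v0_def using assms by (simp add: norm_mult)
  have n0: "0 < norm v0" using v00 by simp
  have "S q n (norm v) = S q n (norm v0)" using nv S_inv[OF n0] by auto
  have "cmod (ismail_masson_h n x q) = norm (hsum q n v)"
    unfolding ismail_masson_h_def v_def ..
  also have "\<dots> \<le> S q n (norm v)" by (rule hsum_le[OF assms(1,2)])
  also have "\<dots> = S q n (norm v0)" using nv S_inv[OF n0] by auto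
  also have "\<dots> \<le> cmod u ^ n / q powr ((real n)^2 * t)
            * ramanujanA q (- (q powr (real n * (2 * t - 1)) / (cmod u)^2))"
    unfolding nv0 by (rule S_bound) (use assms in auto)
  finally show ?thesis unfolding x_def .
qed

end
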